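(* Let $n\ge 3$, $q=\frac{2n}{n-2}$, $\kappa=\frac{n-1}{n}$, $p>1$. Identify $S^1$ with $[-\pi,\pi]$ with endpoints identified, and let $\lambda=-1$ on $(-\pi,0)$, $\lambda=1$ on $(0,\pi)$. Let $N$ be a smooth positive function on $S^1$, $\gamma_N=-\frac{\int_{S^1}\lambda N}{\int_{S^1}N}$, and $t\in\mathbb{R}$. For $d>0$ let $\hat\psi_d$ be the unique positive solution in $W^{2,\infty}(S^1)$ of $$-2\kappa q\,d^{-2q/n}\hat\psi_d''-\kappa(\gamma_N+\lambda)^2\hat\psi_d^{-q-1}+\kappa(t+\lambda)^2\hat\psi_d^{q-1}=0,$$ and let $\mathcal{F}_0(d)=\hat\psi_d(0)$. Let $\Psi_{N,t}=\left[\frac{1+\gamma_N^2}{1+t^2}\right]^{\frac{1}{2q}}$. If $|t|\neq1$, then $\hat\psi_d\to\Psi_{N,t}$ in $W^{2,p}(S^1)$ (and hence uniformly on $S^1$) as $d\to0^+$. In particular $\lim_{d\to0^+}\mathcal{F}_0(d)=\Psi_{N,t}$. *)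

theory Defs
  imports "HOL-Analysis.Analysis"
begin

text \<open>The circle S^1 is identified with [-pi,pi] with endpoints identified; functions on
S^1 are rendered as 2pi-periodic functions on the real line.\<close>

definition periodic_2pi :: "(real \<Rightarrow> real) \<Rightarrow> bool" where
  "periodic_2pi f \<longleftrightarrow> (\<forall>x. f (x + 2 * pi) = f x)"

text \<open>lambda = -1 on (-pi,0), 1 on (0,pi) (extended periodically; the value at 0, pi is irrelevant).\<close>
definition lam :: "real \<Rightarrow> real" where
  "lam x = sgn (sin x)"

definition smooth_on_circle :: "(real \<Rightarrow> real) \<Rightarrow> bool" where
  "smooth_on_circle f \<longleftrightarrow> periodic_2pi f \<and> (\<forall>k x. ((deriv ^^ k) f) differentiable (at x))"

definition gammaN :: "(real \<Rightarrow> real) \<Rightarrow> real" where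
  "gammaN N = - (integral {-pi..pi} (\<lambda>x. lam x * N x)) / integral {-pi..pi} N"

text \<open>W^{2,infinity}(S^1): periodic C^1 functions whose derivative is Lipschitz.\<close>
definition W2inf_circle :: "(real \<Rightarrow> real) \<Rightarrow> bool" where
  "W2inf_circle f \<longleftrightarrow> periodic_2pi f \<and> (\<forall>x. f differentiable (at x)) \<and>
     (\<exists>L. \<forall>x y. \<bar>deriv f x - deriv f y\<bar> \<le> L * \<bar>x - y\<bar>)"

definition is_pos_solution ::
  "real \<Rightarrow> real \<Rightarrow> real \<Rightarrow> real \<Rightarrow> real \<Rightarrow> real \<Rightarrow> (real \<Rightarrow> real) \<Rightarrow> bool" where
  "is_pos_solution n q \<kappa> \<gamma> t d \<psi> \<longleftrightarrow>
     W2inf_circle \<psi> \<and> (\<forall>x. \<psi> x > 0) \<and>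
     (AE x in lebesgue. \<exists>D. (deriv \<psi> has_real_derivative D) (at x) \<and>
        - 2 * \<kappa> * q * d powr (- 2 * q / n) * D
        - \<kappa> * (\<gamma> + lam x)^2 * \<psi> x powr (- q - 1)
        + \<kappa> * (t + lam x)^2 * \<psi> x powr (q - 1) = 0)"

text \<open>p-th power of the W^{2,p}(S^1) distance between f and the constant c
  (second derivative taken a.e., as the derivative of the Lipschitz function f').\<close>
definition W2p_dist_pow :: "real \<Rightarrow> (real \<Rightarrow> real) \<Rightarrow> real \<Rightarrow> ennreal" where
  "W2p_dist_pow p f c =
     (\<integral>\<^sup>+ x \<in> {-pi..pi}. ennreal (\<bar>f x - c\<bar> powr p + \<bar>deriv f x\<bar> powr p
                               + \<bar>deriv (deriv f) x\<bar> powr p) \<partial>lebesgue)"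

end

theory Submission
  imports Defs
begin



lemma mvi_upper:
  fixes g :: "real \<Rightarrow> real"
  assumes ab: "a \<le> b" and lip: "\<And>x y. \<bar>g x - g y\<bar> \<le> L * \<bar>x - y\<bar>"
    and negE: "negligible E"
    and der: "\<And>x. x \<in> {a<..<b} \<Longrightarrow> x \<notin> E \<Longrightarrow> \<exists>D. (g has_real_derivative D) (at x) \<and> D \<le> \<beta>"
  shows "g b - g a \<le> \<beta> * (b - a)"
proof -
  have L0: "L \<ge> 0" using lip[of 1 0] by auto
  have key: "g b - g a \<le> (\<beta> + e) * (b - a)" if e: "e > 0" for e
  proof (rule ccontr)
    assume "\<not> ?thesis"
    define h where "h x = g x - (\<beta> + e) * x" for x
    have hab: "h a < h b" using \<open>\<not> _\<close> by (simp add: h_def algebra_simps)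
    have contg: "continuous_on UNIV g"
    proof (rule continuous_onI)
      fix x and d :: real assume "d > 0"
      show "\<exists>r>0. \<forall>x'\<in>UNIV. dist x' x < r \<longrightarrow> dist (g x') (g x) \<le> d"
      proof (cases "L = 0")
        case True then show ?thesis using lip[of _ x] \<open>d>0\<close> by (auto simp: dist_real_def intro!: exI[of _ 1]) (metis diff_self abs_zero less_imp_le)
      next
        case False
        show ?thesis
        proof (intro exI[of _ "d / L"] conjI ballI impI)
          show "d / L > 0" using False L0 \<open>d>0\<close> by simp
          fix x' assume "dist x' x < d / L"
          then have "L * \<bar>x' - x\<bar> \<le> d" using False L0 by (simp add: dist_real_def field_simps)
          then show "dist (g x') (g x) \<le> d" using lip[of x' x] by (simp add: dist_real_def)
        qed
      qed
    qed
    have conth: "continuous_on UNIV h" unfolding h_def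
      by (intro continuous_intros contg)
    have sub: "{h a<..<h b} \<subseteq> h ` (E \<inter> {a..b})"
    proof
      fix c assume c: "c \<in> {h a<..<h b}"
      define S where "S = {x \<in> {a..b}. h x = c}"
      have Sne: "S \<noteq> {}"
        using IVT'[of h a c b] c ab conth continuous_on_subset
        by (force simp: S_def)
      have Scl: "closed S" unfolding S_def
        using continuous_closed_preimage_constant[of "{a..b}" h c] conth continuous_on_subset
        by (metis (no_types, lifting) closed_atLeastAtMost subset_UNIV Collect_cong)
      have Sbd: "bdd_above S" unfolding S_def by (auto intro: bdd_aboveI[of _ b])
      define xc where "xc = Sup S"
      have xcS: "xc \<in> S" using closed_contains_Sup[OF Sne Sbd Scl] xc_def by simp
      then have xc: "a \<le> xc" "xc \<le> b" "h xc = c" by (auto simp: S_def)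
      have "xc \<noteq> a" using xc c by auto
      have "xc \<noteq> b" using xc c by auto
      have above: "h y > c" if y: "xc < y" "y \<le> b" for y
      proof (rule ccontr)
        assume "\<not> h y > c"
        then have "h y \<le> c" by simp
        then obtain z where z: "y \<le> z" "z \<le> b" "h z = c"
          using IVT'[of h y c b] y c conth continuous_on_subset by force
        then have "z \<in> S" using xc y by (auto simp: S_def)
        then have "z \<le> xc" unfolding xc_def using Sbd by (simp add: cSup_upper)
        then show False using z y by simp
      qed
      have "xc \<in> E"
      proof (rule ccontr)
        assume "xc \<notin> E"
        then obtain D where D: "(g has_real_derivative D) (at xc)" "D \<le> \<beta>"
          using der[of xc] xc \<open>xc \<noteq> a\<close> \<open>xc \<noteq> b\<close> by force
        have hd: "(h has_real_derivative D - (\<beta> + e)) (at xc)" unfolding h_def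
          by (auto intro!: derivative_eq_intros D(1))
        then obtain dd where dd: "dd > 0" "\<And>k. k > 0 \<Longrightarrow> k < dd \<Longrightarrow> h (xc + k) < h xc"
          using DERIV_neg_dec_right[OF hd] D(2) e by force
        define k where "k = min (dd/2) (b - xc)"
        have "k > 0" using dd \<open>xc \<noteq> b\<close> xc by (simp add: k_def)
        have "h (xc + k) < h xc" using dd(2)[of k] \<open>k>0\<close> dd by (simp add: k_def)
        moreover have "h (xc + k) > c" using above[of "xc + k"] \<open>k>0\<close> by (simp add: k_def)
        ultimately show False using xc by simp
      qed
      then show "c \<in> h ` (E \<inter> {a..b})" using xc by force
    qed
    have "negligible (h ` (E \<inter> {a..b}))"
    proof (rule negligible_locally_Lipschitz_image)
      show "negligible (E \<inter> {a..b})" using negE negligible_Int by blast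
      fix x assume "x \<in> E \<inter> {a..b}"
      show "\<exists>T B. open T \<and> x \<in> T \<and> (\<forall>y\<in>E \<inter> {a..b} \<inter> T. norm (h y - h x) \<le> B * norm (y - x))"
      proof (intro exI conjI ballI)
        show "open (UNIV::real set)" by simp
        show "x \<in> UNIV" by simp
        fix y
        have "\<bar>h y - h x\<bar> \<le> \<bar>g y - g x\<bar> + \<bar>\<beta> + e\<bar> * \<bar>y - x\<bar>"
          unfolding h_def by (simp add: abs_mult[symmetric] algebra_simps)
        also have "\<dots> \<le> (L + \<bar>\<beta> + e\<bar>) * \<bar>y - x\<bar>" using lip[of y x] by (simp add: algebra_simps)
        finally show "norm (h y - h x) \<le> (L + \<bar>\<beta> + e\<bar>) * norm (y - x)" by simp
      qed
    qed simp
    then have "negligible {h a<..<h b}" using sub negligible_subset by blast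
    then show False using hab negligible_interval(2)[of "h a" "h b"] by simp
  qed
  show ?thesis
  proof (rule field_le_epsilon)
    fix e :: real assume "e > 0"
    show "g b - g a \<le> \<beta> * (b - a) + e"
    proof (cases "a = b")
      case True then show ?thesis using \<open>e>0\<close> by simp
    next
      case False
      then have "b - a > 0" using ab by simp
      have "g b - g a \<le> (\<beta> + e / (b - a)) * (b - a)" using key[of "e/(b-a)"] \<open>e>0\<close> \<open>b-a>0\<close> by simp
      also have "\<dots> = \<beta> * (b - a) + e" using \<open>b-a>0\<close> by (simp add: field_simps)
      finally show ?thesis .
    qed
  qed
qed

lemma mvi_lower:
  fixes g :: "real \<Rightarrow> real"
  assumes ab: "a \<le> b" and lip: "\<And>x y. \<bar>g x - g y\<bar> \<le> L * \<bar>x - y\<bar>"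
    and negE: "negligible E"
    and der: "\<And>x. x \<in> {a<..<b} \<Longrightarrow> x \<notin> E \<Longrightarrow> \<exists>D. (g has_real_derivative D) (at x) \<and> D \<ge> \<beta>"
  shows "g b - g a \<ge> \<beta> * (b - a)"
proof -
  have "(- g b) - (- g a) \<le> (- \<beta>) * (b - a)"
  proof (rule mvi_upper[OF ab _ negE])
    show "\<bar>- g x - - g y\<bar> \<le> L * \<bar>x - y\<bar>" for x y using lip[of x y] by simp
    fix x assume "x \<in> {a<..<b}" "x \<notin> E"
    then obtain D where "(g has_real_derivative D) (at x)" "D \<ge> \<beta>" using der by blast
    then show "\<exists>D. ((\<lambda>x. - g x) has_real_derivative D) (at x) \<and> D \<le> - \<beta>"
      by (intro exI[of _ "-D"]) (auto intro!: derivative_eq_intros)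
  qed
  then show ?thesis by simp
qed




lemma periodic_nat: "periodic_2pi f \<Longrightarrow> f (x + real k * (2*pi)) = f x"
proof (induction k arbitrary: x)
  case 0 then show ?case by simp
next
  case (Suc k)
  have "f (x + real (Suc k) * (2*pi)) = f ((x + real k * (2*pi)) + 2*pi)" by (simp add: algebra_simps)
  also have "\<dots> = f (x + real k * (2*pi))" using Suc.prems by (simp add: periodic_2pi_def)
  finally show ?case using Suc by simp
qed

lemma periodic_int: "periodic_2pi f \<Longrightarrow> f (x + real_of_int k * (2*pi)) = f x"
proof (cases "k \<ge> 0")
  case True
  assume p: "periodic_2pi f"
  then show ?thesis using periodic_nat[OF p, of x "nat k"] True by simp
next
  case False
  assume p: "periodic_2pi f"
  have "f x = f ((x + real_of_int k * (2*pi)) + real (nat (-k)) * (2*pi))"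
    using False by (simp add: algebra_simps)
  also have "\<dots> = f (x + real_of_int k * (2*pi))" using periodic_nat[OF p] by simp
  finally show ?thesis by simp
qed

lemma periodic_reduce: assumes "periodic_2pi f" shows "\<exists>y\<in>{-pi..pi}. f x = f y"
proof -
  define k where "k = \<lfloor>(x + pi) / (2*pi)\<rfloor>"
  define y where "y = x + real_of_int (-k) * (2*pi)"
  have "real_of_int k \<le> (x + pi) / (2*pi)" "(x + pi) / (2*pi) < real_of_int k + 1"
    unfolding k_def by linarith+
  then have "real_of_int k * (2*pi) \<le> x + pi" "x + pi < (real_of_int k + 1) * (2*pi)"
    using pi_gt_zero by (simp_all add: field_simps)
  then have "y \<in> {-pi..pi}" unfolding y_def by (auto simp: algebra_simps)
  moreover have "f y = f x" unfolding y_def using periodic_int[OF assms] by blast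
  ultimately show ?thesis by metis
qed

lemma periodic_deriv:
  assumes p: "periodic_2pi f" and d: "\<And>x. f differentiable (at x)"
  shows "periodic_2pi (deriv f)"
  unfolding periodic_2pi_def
proof
  fix x
  have "(f has_real_derivative deriv f (x + 2*pi)) (at (x + 2*pi))"
    using d DERIV_deriv_iff_real_differentiable by blast
  then have "((\<lambda>y. f (y + 2*pi)) has_real_derivative deriv f (x + 2*pi)) (at x)"
    using DERIV_shift by blast
  moreover have "(\<lambda>y. f (y + 2*pi)) = f" using p by (auto simp: periodic_2pi_def)
  ultimately show "deriv f (x + 2*pi) = deriv f x" using DERIV_imp_deriv by fastforce
qed

lemma negligible_sin_zero: "negligible {x::real. sin x = 0}"
proof -
  have eq: "{x::real. sin x = 0} = (\<lambda>i::int. of_int i * pi) ` UNIV" by (auto simp: sin_zero_iff_int2)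
  have "countable {x::real. sin x = 0}" by (subst eq, rule countable_image, simp)
  then show ?thesis
    by (simp add: negligible_iff_null_sets countable_imp_null_set_lborel null_sets_completionI)
qed

lemma lam_pos: "x \<in> {0<..<pi} \<Longrightarrow> lam x = 1"
  by (auto simp: lam_def sin_gt_zero)

lemma lam_neg: "x \<in> {-pi<..<0} \<Longrightarrow> lam x = -1"
proof -
  assume "x \<in> {-pi<..<0}"
  then have "sin (-x) > 0" by (intro sin_gt_zero) auto
  then show ?thesis by (auto simp: lam_def)
qed

lemma lam_pm: "sin x \<noteq> 0 \<Longrightarrow> lam x = 1 \<or> lam x = -1"
  by (auto simp: lam_def sgn_if)

lemma int_pos:
  fixes N :: "real \<Rightarrow> real"
  assumes c: "continuous_on {a..b} N" and pos: "\<And>x. N x > 0" and ab: "a < b"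
  shows "integral {a..b} N > 0"
proof -
  obtain x where x: "x \<in> {a..b}" "\<And>y. y \<in> {a..b} \<Longrightarrow> N x \<le> N y"
    using continuous_attains_inf[of "{a..b}" N] c ab by auto
  have "integral {a..b} (\<lambda>_. N x) \<le> integral {a..b} N"
    by (rule integral_le) (auto intro: integrable_continuous_interval c x)
  moreover have "integral {a..b} (\<lambda>_. N x) = (b - a) * N x" using ab by simp
  moreover have "(b - a) * N x > 0" using ab pos[of x] by simp
  ultimately show ?thesis by linarith
qed

lemma gamma_bound:
  assumes s: "smooth_on_circle N" and pos: "\<And>x. N x > 0"
  shows "\<bar>gammaN N\<bar> < 1"
proof -
  have "N differentiable (at x)" for x using s unfolding smooth_on_circle_def
    by (metis funpow_0)
  then have cN: "continuous_on S N" for S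
    by (meson continuous_at_imp_continuous_on differentiable_imp_continuous_within)
  define I1 where "I1 = integral {-pi..0} N"
  define I2 where "I2 = integral {0..pi} N"
  have I1: "I1 > 0" unfolding I1_def by (rule int_pos[OF cN pos]) simp
  have I2: "I2 > 0" unfolding I2_def by (rule int_pos[OF cN pos]) simp
  have iN: "N integrable_on {a..b}" for a b by (rule integrable_continuous_interval[OF cN])
  have tot: "integral {-pi..pi} N = I1 + I2" unfolding I1_def I2_def
    using Henstock_Kurzweil_Integration.integral_combine[where a="-pi" and c=0 and b=pi and f=N] iN by simp
  have neg1: "negligible {-pi, 0::real}" by simp
  have neg2: "negligible {0, pi::real}" by simp
  have e1: "\<And>x. x \<in> {-pi..0} - {-pi, 0} \<Longrightarrow> lam x * N x = - N x" using lam_neg by auto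
  have e2: "\<And>x. x \<in> {0..pi} - {0, pi} \<Longrightarrow> lam x * N x = N x" using lam_pos by auto
  have i1: "(\<lambda>x. lam x * N x) integrable_on {-pi..0}"
    by (rule integrable_spike[OF _ neg1, of "\<lambda>x. - N x"]) (use e1 iN integrable_neg[OF iN] in auto)
  have i2: "(\<lambda>x. lam x * N x) integrable_on {0..pi}"
    by (rule integrable_spike[OF _ neg2, of N]) (use e2 iN in auto)
  have j1: "integral {-pi..0} (\<lambda>x. lam x * N x) = - I1"
    unfolding I1_def using integral_spike[OF neg1, of "{-pi..0}" "\<lambda>x. lam x * N x" "\<lambda>x. - N x"] e1 by (simp add: integral_neg)
  have j2: "integral {0..pi} (\<lambda>x. lam x * N x) = I2"
    unfolding I2_def using integral_spike[OF neg2, of "{0..pi}" "\<lambda>x. lam x * N x" N] e2 by simp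
  have "integral {-pi..pi} (\<lambda>x. lam x * N x) = I2 - I1"
    using Henstock_Kurzweil_Integration.integral_combine[where a="-pi" and c=0 and b=pi and f="\<lambda>x. lam x * N x"] Henstock_Kurzweil_Integration.integrable_combine[OF _ _ i1 i2] j1 j2
    by simp
  then have "gammaN N = (I1 - I2) / (I1 + I2)" unfolding gammaN_def tot by (simp add: minus_divide_left)
  moreover have "(I1 - I2) / (I1 + I2) < 1" "-1 < (I1 - I2) / (I1 + I2)" using I1 I2 by (simp_all add: field_simps)
  ultimately show ?thesis by (simp only: abs_less_iff) simp
qed




definition Fq :: "real \<Rightarrow> real \<Rightarrow> real \<Rightarrow> real \<Rightarrow> real \<Rightarrow> real" where
  "Fq q \<gamma> t x s = (t + lam x)^2 * s powr (q - 1) - (\<gamma> + lam x)^2 * s powr (- q - 1)"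

definition mn2 :: "real \<Rightarrow> real" where "mn2 u = min ((u + 1)^2) ((u - 1)^2)"
definition mx2 :: "real \<Rightarrow> real" where "mx2 u = max ((u + 1)^2) ((u - 1)^2)"

lemma Fq_factor: "s > 0 \<Longrightarrow> Fq q \<gamma> t x s = s powr (- q - 1) * ((t + lam x)^2 * s powr (2 * q) - (\<gamma> + lam x)^2)"
proof -
  assume s: "s > 0"
  have "s powr (q - 1) = s powr (- q - 1) * s powr (2 * q)"
    by (simp add: powr_add[symmetric])
  then show ?thesis unfolding Fq_def by (simp add: algebra_simps)
qed

lemma sq_bounds: "sin x \<noteq> 0 \<Longrightarrow> mn2 u \<le> (u + lam x)^2 \<and> (u + lam x)^2 \<le> mx2 u"
  using lam_pm[of x] by (auto simp: mn2_def mx2_def)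

lemma mn2_pos: "\<bar>u\<bar> \<noteq> 1 \<Longrightarrow> mn2 u > 0"
proof -
  assume "\<bar>u\<bar> \<noteq> 1"
  then have "u \<noteq> -1" "u \<noteq> 1" by auto
  then have "u + 1 \<noteq> 0" "u - 1 \<noteq> 0" by auto
  then show ?thesis by (simp add: mn2_def)
qed

lemma mn2_le_mx2: "mn2 u \<le> mx2 u" unfolding mn2_def mx2_def by (rule order.trans[OF min.cobounded1 max.cobounded1])

lemma global_max:
  fixes f :: "real \<Rightarrow> real"
  assumes "periodic_2pi f" "continuous_on UNIV f"
  shows "\<exists>x0\<in>{-pi..pi}. \<forall>y. f y \<le> f x0"
proof -
  obtain x0 where x0: "x0 \<in> {-pi..pi}" "\<And>y. y \<in> {-pi..pi} \<Longrightarrow> f y \<le> f x0"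
    using continuous_attains_sup[of "{-pi..pi}" f] assms(2) continuous_on_subset by force
  have "f y \<le> f x0" for y using periodic_reduce[OF assms(1), of y] x0 by auto
  then show ?thesis using x0 by blast
qed

lemma global_min:
  fixes f :: "real \<Rightarrow> real"
  assumes "periodic_2pi f" "continuous_on UNIV f"
  shows "\<exists>x0\<in>{-pi..pi}. \<forall>y. f x0 \<le> f y"
proof -
  obtain x0 where x0: "x0 \<in> {-pi..pi}" "\<And>y. y \<in> {-pi..pi} \<Longrightarrow> f x0 \<le> f y"
    using continuous_attains_inf[of "{-pi..pi}" f] assms(2) continuous_on_subset by force
  have "f x0 \<le> f y" for y using periodic_reduce[OF assms(1), of y] x0 by auto
  then show ?thesis using x0 by blast
qed

locale sol =
  fixes \<psi> :: "real \<Rightarrow> real" and q A t \<gamma> L :: real and E :: "real set"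
  assumes q: "q > 1" and A: "A > 0" and t: "\<bar>t\<bar> \<noteq> 1" and g: "\<bar>\<gamma>\<bar> < 1"
    and per: "periodic_2pi \<psi>" and dif: "\<And>x. \<psi> differentiable (at x)"
    and lip: "\<And>x y. \<bar>deriv \<psi> x - deriv \<psi> y\<bar> \<le> L * \<bar>x - y\<bar>"
    and pos: "\<And>x. \<psi> x > 0" and negE: "negligible E" and sinE: "\<And>x. x \<notin> E \<Longrightarrow> sin x \<noteq> 0"
    and der: "\<And>x. x \<notin> E \<Longrightarrow> (deriv \<psi> has_real_derivative Fq q \<gamma> t x (\<psi> x) / A) (at x)"
begin

lemma cont: "continuous_on UNIV \<psi>"
  using dif by (meson continuous_at_imp_continuous_on differentiable_imp_continuous_within)

lemma hasder: "(\<psi> has_real_derivative deriv \<psi> x) (at x)"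
  using dif DERIV_deriv_iff_real_differentiable by blast

lemma amin: "mn2 t > 0" by (rule mn2_pos[OF t])
lemma bmin: "mn2 \<gamma> > 0" by (intro mn2_pos) (use g in linarith)

definition "M0 = (mx2 \<gamma> / mn2 t) powr (1 / (2 * q))"
definition "m0 = (mn2 \<gamma> / mx2 t) powr (1 / (2 * q))"

lemma M0_pow: "M0 powr (2 * q) = mx2 \<gamma> / mn2 t"
  unfolding M0_def using q amin bmin mn2_le_mx2[of \<gamma>] by (simp add: powr_powr)
lemma m0_pow: "m0 powr (2 * q) = mn2 \<gamma> / mx2 t"
  unfolding m0_def using q amin bmin mn2_le_mx2[of t] by (simp add: powr_powr)

lemma upper: "\<psi> x \<le> M0"
proof (rule ccontr)
  assume "\<not> \<psi> x \<le> M0"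
  obtain x0 where x0: "\<And>y. \<psi> y \<le> \<psi> x0" using global_max[OF per cont] by blast
  define P where "P = \<psi> x0"
  have PM: "P > M0" using x0[of x] \<open>\<not> _\<close> unfolding P_def by simp
  define l where "l = (M0 + P) / 2"
  have M0pos: "M0 > 0" unfolding M0_def using amin bmin mn2_le_mx2[of \<gamma>] by simp
  have l: "M0 < l" "l < P" "0 < l" using PM M0pos by (auto simp: l_def)
  have lpow: "l powr (2*q) > mx2 \<gamma> / mn2 t"
    using powr_less_mono2[of "2*q" M0 l] q M0pos l M0_pow by simp
  define \<eta> where "\<eta> = P powr (- q - 1) * (mn2 t * l powr (2*q) - mx2 \<gamma>)"
  have \<eta>: "\<eta> > 0" unfolding \<eta>_def using lpow amin l by (simp add: field_simps)
  have Fbd: "Fq q \<gamma> t y s \<ge> \<eta>" if y: "y \<notin> E" and s: "l \<le> s" "s \<le> P" for y s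
  proof -
    have s0: "s > 0" using s l by simp
    have a1: "(t + lam y)^2 * s powr (2*q) - (\<gamma> + lam y)^2 \<ge> mn2 t * l powr (2*q) - mx2 \<gamma>"
    proof -
      have "mn2 t * l powr (2*q) \<le> (t + lam y)^2 * s powr (2*q)"
        using sq_bounds[OF sinE[OF y], of t] powr_mono2[of "2*q" l s] q s l amin
        by (intro mult_mono) auto
      then show ?thesis using sq_bounds[OF sinE[OF y], of \<gamma>] by linarith
    qed
    have a2: "s powr (- q - 1) \<ge> P powr (- q - 1)" using powr_mono2'[of "- q - 1" s P] q s0 s by simp
    have "\<eta> \<le> s powr (- q - 1) * ((t + lam y)^2 * s powr (2*q) - (\<gamma> + lam y)^2)"
      unfolding \<eta>_def using a1 a2 lpow amin
      by (intro mult_mono) (auto simp: field_simps)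
    then show ?thesis using Fq_factor[OF s0] by simp
  qed
  have "isCont \<psi> x0" using cont continuous_on_eq_continuous_at by blast
  then have "\<psi> \<midarrow>x0\<rightarrow> \<psi> x0" by (simp add: isCont_def)
  from LIM_D[OF this, of "P - l"] l
  obtain \<delta> where \<delta>: "\<delta> > 0" "\<And>y. y \<noteq> x0 \<and> norm (y - x0) < \<delta> \<Longrightarrow> norm (\<psi> y - \<psi> x0) < P - l"
    by auto
  have near: "\<psi> y > l" if "\<bar>y - x0\<bar> < \<delta>" for y
    using \<delta>(2)[of y] that l unfolding P_def by (cases "y = x0") auto
  have d0: "deriv \<psi> x0 = 0"
    using DERIV_local_max[OF hasder[of x0], of 1] x0 by auto
  have dpos: "deriv \<psi> z > 0" if z: "x0 < z" "z < x0 + \<delta>" for z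
  proof -
    have "deriv \<psi> z - deriv \<psi> x0 \<ge> (\<eta> / A) * (z - x0)"
    proof (rule mvi_lower[OF _ lip negE])
      show "x0 \<le> z" using z by simp
      fix y assume y: "y \<in> {x0<..<z}" "y \<notin> E"
      have "Fq q \<gamma> t y (\<psi> y) \<ge> \<eta>" using Fbd[OF y(2)] near[of y] y z x0[of y] unfolding P_def by auto
      then have "Fq q \<gamma> t y (\<psi> y) / A \<ge> \<eta> / A" using A by (simp add: divide_right_mono)
      then show "\<exists>D. (deriv \<psi> has_real_derivative D) (at y) \<and> \<eta> / A \<le> D" using der[OF y(2)] by blast
    qed
    moreover have "(\<eta> / A) * (z - x0) > 0" using \<eta> A z by simp
    ultimately show ?thesis using d0 by simp
  qed
  define y1 where "y1 = x0 + \<delta> / 2"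
  obtain l' z where z: "x0 < z" "z < y1" "DERIV \<psi> z :> l'" "\<psi> y1 - \<psi> x0 = (y1 - x0) * l'"
    using MVT[of x0 y1 \<psi>] \<delta> cont dif continuous_on_subset unfolding y1_def by force
  have "l' = deriv \<psi> z" using z(3) DERIV_imp_deriv by metis
  then have "l' > 0" using dpos[of z] z \<delta> unfolding y1_def by simp
  moreover have "y1 - x0 > 0" using \<delta> unfolding y1_def by simp
  ultimately have "(y1 - x0) * l' > 0" by simp
  then have "\<psi> y1 > \<psi> x0" using z(4) by linarith
  then show False using x0[of y1] by simp
qed

lemma lower: "\<psi> x \<ge> m0"
proof (rule ccontr)
  assume "\<not> \<psi> x \<ge> m0"
  obtain x0 where x0: "\<And>y. \<psi> x0 \<le> \<psi> y" using global_min[OF per cont] by blast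
  define P where "P = \<psi> x0"
  have PM: "P < m0" using x0[of x] \<open>\<not> _\<close> unfolding P_def by simp
  have P0: "P > 0" using pos unfolding P_def by simp
  define l where "l = (m0 + P) / 2"
  have l: "l < m0" "P < l" "0 < l" using PM P0 by (auto simp: l_def)
  have lpow: "l powr (2*q) < mn2 \<gamma> / mx2 t"
    using powr_less_mono2[of "2*q" l m0] q l m0_pow by simp
  have amax: "mx2 t > 0" using amin mn2_le_mx2[of t] by simp
  define \<eta> where "\<eta> = l powr (- q - 1) * (mn2 \<gamma> - mx2 t * l powr (2*q))"
  have \<eta>: "\<eta> > 0" unfolding \<eta>_def using lpow amax l by (simp add: field_simps)
  have Fbd: "Fq q \<gamma> t y s \<le> - \<eta>" if y: "y \<notin> E" and s: "P \<le> s" "s \<le> l" for y s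
  proof -
    have s0: "s > 0" using s P0 by simp
    have a1: "(t + lam y)^2 * s powr (2*q) - (\<gamma> + lam y)^2 \<le> - (mn2 \<gamma> - mx2 t * l powr (2*q))"
    proof -
      have "(t + lam y)^2 * s powr (2*q) \<le> mx2 t * l powr (2*q)"
        using sq_bounds[OF sinE[OF y], of t] powr_mono2[of "2*q" s l] q s s0 amax
        by (intro mult_mono) auto
      then show ?thesis using sq_bounds[OF sinE[OF y], of \<gamma>] by linarith
    qed
    have a2: "s powr (- q - 1) \<ge> l powr (- q - 1)" using powr_mono2'[of "- q - 1" s l] q s0 s by simp
    have c0: "mn2 \<gamma> - mx2 t * l powr (2*q) > 0" using lpow amax by (simp add: field_simps)
    have "s powr (- q - 1) * ((t + lam y)^2 * s powr (2*q) - (\<gamma> + lam y)^2)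
          \<le> s powr (- q - 1) * (- (mn2 \<gamma> - mx2 t * l powr (2*q)))"
      using a1 s0 by (intro mult_left_mono) auto
    also have "\<dots> \<le> l powr (- q - 1) * (- (mn2 \<gamma> - mx2 t * l powr (2*q)))"
      using a2 c0 by (intro mult_right_mono_neg) auto
    also have "\<dots> = - \<eta>" unfolding \<eta>_def by (simp add: algebra_simps)
    finally show ?thesis using Fq_factor[OF s0] by simp
  qed
  have "isCont \<psi> x0" using cont continuous_on_eq_continuous_at by blast
  then have "\<psi> \<midarrow>x0\<rightarrow> \<psi> x0" by (simp add: isCont_def)
  from LIM_D[OF this, of "l - P"] l
  obtain \<delta> where \<delta>: "\<delta> > 0" "\<And>y. y \<noteq> x0 \<and> norm (y - x0) < \<delta> \<Longrightarrow> norm (\<psi> y - \<psi> x0) < l - P"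
    by auto
  have near: "\<psi> y < l" if "\<bar>y - x0\<bar> < \<delta>" for y
    using \<delta>(2)[of y] that l unfolding P_def by (cases "y = x0") auto
  have d0: "deriv \<psi> x0 = 0"
    using DERIV_local_min[OF hasder[of x0], of 1] x0 by auto
  have dneg: "deriv \<psi> z < 0" if z: "x0 < z" "z < x0 + \<delta>" for z
  proof -
    have "deriv \<psi> z - deriv \<psi> x0 \<le> (- \<eta> / A) * (z - x0)"
    proof (rule mvi_upper[OF _ lip negE])
      show "x0 \<le> z" using z by simp
      fix y assume y: "y \<in> {x0<..<z}" "y \<notin> E"
      have "Fq q \<gamma> t y (\<psi> y) \<le> - \<eta>" using Fbd[OF y(2)] near[of y] y z x0[of y] unfolding P_def by auto
      then have "Fq q \<gamma> t y (\<psi> y) / A \<le> - \<eta> / A" using A by (metis divide_right_mono less_imp_le)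
      then show "\<exists>D. (deriv \<psi> has_real_derivative D) (at y) \<and> D \<le> - \<eta> / A" using der[OF y(2)] by blast
    qed
    moreover have "(\<eta> / A) * (z - x0) > 0" using \<eta> A z by simp
    ultimately show ?thesis using d0 by simp
  qed
  define y1 where "y1 = x0 + \<delta> / 2"
  obtain l' z where z: "x0 < z" "z < y1" "DERIV \<psi> z :> l'" "\<psi> y1 - \<psi> x0 = (y1 - x0) * l'"
    using MVT[of x0 y1 \<psi>] \<delta> cont dif continuous_on_subset unfolding y1_def by force
  have "l' = deriv \<psi> z" using z(3) DERIV_imp_deriv by metis
  then have "l' < 0" using dneg[of z] z \<delta> unfolding y1_def by simp
  moreover have "y1 - x0 > 0" using \<delta> unfolding y1_def by simp
  ultimately have "(y1 - x0) * l' < 0" by (simp add: mult_pos_neg)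
  then have "\<psi> y1 < \<psi> x0" using z(4) by linarith
  then show False using x0[of y1] by simp
qed

end



lemma mx2_nn: "mx2 u \<ge> 0" unfolding mx2_def by (simp add: le_max_iff_disj)

context sol begin

lemma m0pos: "m0 > 0" unfolding m0_def using amin bmin mn2_le_mx2[of t] by simp

definition "K = mx2 t * M0 powr (q - 1) + mx2 \<gamma> * m0 powr (- q - 1)"

lemma Fq_abs: assumes x: "x \<notin> E" and s: "m0 \<le> s" "s \<le> M0" shows "\<bar>Fq q \<gamma> t x s\<bar> \<le> K"
proof -
  have s0: "s > 0" using s m0pos by simp
  have a: "(t + lam x)^2 * s powr (q - 1) \<le> mx2 t * M0 powr (q - 1)"
    using sq_bounds[OF sinE[OF x], of t] powr_mono2[of "q - 1" s M0] q s0 s mx2_nn[of t]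
    by (intro mult_mono) auto
  have b: "(\<gamma> + lam x)^2 * s powr (- q - 1) \<le> mx2 \<gamma> * m0 powr (- q - 1)"
    using sq_bounds[OF sinE[OF x], of \<gamma>] powr_mono2'[of "- q - 1" m0 s] q s m0pos mx2_nn[of \<gamma>]
    by (intro mult_mono) auto
  have "0 \<le> (t + lam x)^2 * s powr (q - 1)" "0 \<le> (\<gamma> + lam x)^2 * s powr (- q - 1)" by simp_all
  then show ?thesis using a b unfolding Fq_def K_def by linarith
qed

lemma Fq_abs_psi: "x \<notin> E \<Longrightarrow> \<bar>Fq q \<gamma> t x (\<psi> x)\<bar> \<le> K"
  using Fq_abs lower upper by blast

lemma K0: "K \<ge> 0" unfolding K_def using amin mn2_le_mx2[of t] bmin mn2_le_mx2[of \<gamma>]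
  by (intro add_nonneg_nonneg mult_nonneg_nonneg) auto

lemma lipD: assumes "x \<le> y" shows "\<bar>deriv \<psi> y - deriv \<psi> x\<bar> \<le> K / A * (y - x)"
proof -
  have "deriv \<psi> y - deriv \<psi> x \<le> K / A * (y - x)"
  proof (rule mvi_upper[OF assms lip negE])
    fix z assume z: "z \<in> {x<..<y}" "z \<notin> E"
    have "Fq q \<gamma> t z (\<psi> z) / A \<le> K / A" using Fq_abs_psi[OF z(2)] A by (simp add: divide_right_mono)
    then show "\<exists>D. (deriv \<psi> has_real_derivative D) (at z) \<and> D \<le> K / A" using der[OF z(2)] by blast
  qed
  moreover have "deriv \<psi> y - deriv \<psi> x \<ge> (- K / A) * (y - x)"
  proof (rule mvi_lower[OF assms lip negE])
    fix z assume z: "z \<in> {x<..<y}" "z \<notin> E"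
    have "- K / A \<le> Fq q \<gamma> t z (\<psi> z) / A" using Fq_abs_psi[OF z(2)] A by (simp add: field_simps abs_le_iff)
    then show "\<exists>D. (deriv \<psi> has_real_derivative D) (at z) \<and> - K / A \<le> D" using der[OF z(2)] by blast
  qed
  ultimately show ?thesis by (simp add: abs_le_iff)
qed

lemma lipD2: "\<bar>deriv \<psi> y - deriv \<psi> x\<bar> \<le> K / A * \<bar>y - x\<bar>"
proof (cases "x \<le> y")
  case True then show ?thesis using lipD[OF True] by simp
next
  case False then show ?thesis using lipD[of y x] by (simp add: abs_minus_commute)
qed

lemma dpsi_bound: "\<bar>deriv \<psi> y\<bar> \<le> 2 * pi * K / A"
proof -
  obtain x0 where x0: "x0 \<in> {-pi..pi}" "\<And>y. \<psi> y \<le> \<psi> x0" using global_max[OF per cont] by blast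
  have d0: "deriv \<psi> x0 = 0" using DERIV_local_max[OF hasder[of x0], of 1] x0 by auto
  obtain y' where y': "y' \<in> {-pi..pi}" "deriv \<psi> y = deriv \<psi> y'"
    using periodic_reduce[OF periodic_deriv[OF per dif]] by blast
  have "\<bar>y' - x0\<bar> \<le> 2 * pi" using x0 y' by auto
  then have le: "K / A * \<bar>y' - x0\<bar> \<le> K / A * (2 * pi)" using K0 A by (intro mult_left_mono) auto
  have "\<bar>deriv \<psi> y\<bar> = \<bar>deriv \<psi> y' - deriv \<psi> x0\<bar>" using d0 y' by simp
  also have "\<dots> \<le> K / A * \<bar>y' - x0\<bar>" by (rule lipD2)
  also have "\<dots> \<le> K / A * (2 * pi)" by (rule le)
  also have "\<dots> = 2 * pi * K / A" by simp
  finally show ?thesis .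
qed

lemma psi_osc: "\<bar>\<psi> y - \<psi> 0\<bar> \<le> 2 * pi^2 * K / A"
proof -
  obtain y' where y': "y' \<in> {-pi..pi}" "\<psi> y = \<psi> y'" using periodic_reduce[OF per] by blast
  have main: "\<bar>\<psi> b - \<psi> a\<bar> \<le> 2 * pi * K / A * (b - a)" if ab: "a \<le> b" for a b
  proof (cases "a = b")
    case True then show ?thesis by simp
  next
    case False
    then obtain l z where z: "DERIV \<psi> z :> l" "\<psi> b - \<psi> a = (b - a) * l"
      using MVT[of a b \<psi>] ab cont dif continuous_on_subset by force
    have "l = deriv \<psi> z" using z(1) DERIV_imp_deriv by metis
    then have "\<bar>l\<bar> \<le> 2 * pi * K / A" using dpsi_bound by simp
    then have "\<bar>b - a\<bar> * \<bar>l\<bar> \<le> (b - a) * (2 * pi * K / A)" using ab by (intro mult_mono) auto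
    have "\<bar>\<psi> b - \<psi> a\<bar> = \<bar>b - a\<bar> * \<bar>l\<bar>" by (simp add: z(2) abs_mult)
    also have "\<dots> \<le> (b - a) * (2 * pi * K / A)" by fact
    also have "\<dots> = 2 * pi * K / A * (b - a)" by (simp add: mult.commute)
    finally show ?thesis .
  qed
  have "\<bar>\<psi> y' - \<psi> 0\<bar> \<le> 2 * pi * K / A * pi"
  proof (cases "0 \<le> y'")
    case True
    then have "\<bar>\<psi> y' - \<psi> 0\<bar> \<le> 2 * pi * K / A * (y' - 0)" using main by blast
    also have "\<dots> \<le> 2 * pi * K / A * pi" using y' K0 A by (intro mult_left_mono) auto
    finally show ?thesis .
  next
    case False
    then have "y' \<le> 0" by simp
    then have "\<bar>\<psi> 0 - \<psi> y'\<bar> \<le> 2 * pi * K / A * (0 - y')" by (rule main)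
    also have "\<dots> \<le> 2 * pi * K / A * pi" using y' K0 A by (intro mult_left_mono) auto
    finally show ?thesis by (simp add: abs_minus_commute)
  qed
  then show ?thesis using y' by (simp add: power2_eq_square algebra_simps)
qed

lemma ddpsi: "x \<notin> E \<Longrightarrow> \<bar>deriv (deriv \<psi>) x\<bar> \<le> K / A"
proof -
  assume x: "x \<notin> E"
  have "deriv (deriv \<psi>) x = Fq q \<gamma> t x (\<psi> x) / A" using der[OF x] DERIV_imp_deriv by blast
  then show ?thesis using Fq_abs_psi[OF x] A by (simp add: divide_right_mono)
qed

lemma G_est:
  assumes eps: "\<And>x. x \<notin> E \<Longrightarrow> x \<in> {-pi..pi} \<Longrightarrow> \<bar>Fq q \<gamma> t x (\<psi> x) - Fq q \<gamma> t x (\<psi> 0)\<bar> \<le> \<epsilon>"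
  shows "\<bar>(1 + t^2) * \<psi> 0 powr (q - 1) - (1 + \<gamma>^2) * \<psi> 0 powr (- q - 1)\<bar> \<le> \<epsilon>"
proof -
  define c where "c = \<psi> 0"
  define Fp where "Fp = (t + 1)^2 * c powr (q - 1) - (\<gamma> + 1)^2 * c powr (- q - 1)"
  define Fm where "Fm = (t - 1)^2 * c powr (q - 1) - (\<gamma> - 1)^2 * c powr (- q - 1)"
  have p: "Fq q \<gamma> t x c = Fp" if "x \<in> {0<..<pi}" for x using lam_pos[OF that] unfolding Fq_def Fp_def by simp
  have m: "Fq q \<gamma> t x c = Fm" if "x \<in> {-pi<..<0}" for x using lam_neg[OF that] unfolding Fq_def Fm_def by simp
  have u1: "deriv \<psi> pi - deriv \<psi> 0 \<le> (Fp + \<epsilon>) / A * (pi - 0)"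
  proof (rule mvi_upper[OF _ lip negE])
    fix z assume z: "z \<in> {0<..<pi}" "z \<notin> E"
    have "Fq q \<gamma> t z (\<psi> z) \<le> Fp + \<epsilon>" using eps[OF z(2)] p[OF z(1)] z(1) unfolding c_def by auto
    then have "Fq q \<gamma> t z (\<psi> z) / A \<le> (Fp + \<epsilon>) / A" using A by (simp add: divide_right_mono)
    then show "\<exists>D. (deriv \<psi> has_real_derivative D) (at z) \<and> D \<le> (Fp + \<epsilon>) / A" using der[OF z(2)] by blast
  qed simp
  have l1: "deriv \<psi> pi - deriv \<psi> 0 \<ge> (Fp - \<epsilon>) / A * (pi - 0)"
  proof (rule mvi_lower[OF _ lip negE])
    fix z assume z: "z \<in> {0<..<pi}" "z \<notin> E"
    have "Fq q \<gamma> t z (\<psi> z) \<ge> Fp - \<epsilon>" using eps[OF z(2)] p[OF z(1)] z(1) unfolding c_def by auto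
    then have "Fq q \<gamma> t z (\<psi> z) / A \<ge> (Fp - \<epsilon>) / A" using A by (simp add: divide_right_mono)
    then show "\<exists>D. (deriv \<psi> has_real_derivative D) (at z) \<and> (Fp - \<epsilon>) / A \<le> D" using der[OF z(2)] by blast
  qed simp
  have u2: "deriv \<psi> 0 - deriv \<psi> (-pi) \<le> (Fm + \<epsilon>) / A * (0 - (-pi))"
  proof (rule mvi_upper[OF _ lip negE])
    fix z assume z: "z \<in> {-pi<..<0}" "z \<notin> E"
    have "Fq q \<gamma> t z (\<psi> z) \<le> Fm + \<epsilon>" using eps[OF z(2)] m[OF z(1)] z(1) unfolding c_def by auto
    then have "Fq q \<gamma> t z (\<psi> z) / A \<le> (Fm + \<epsilon>) / A" using A by (simp add: divide_right_mono)
    then show "\<exists>D. (deriv \<psi> has_real_derivative D) (at z) \<and> D \<le> (Fm + \<epsilon>) / A" using der[OF z(2)] by blast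
  qed simp
  have l2: "deriv \<psi> 0 - deriv \<psi> (-pi) \<ge> (Fm - \<epsilon>) / A * (0 - (-pi))"
  proof (rule mvi_lower[OF _ lip negE])
    fix z assume z: "z \<in> {-pi<..<0}" "z \<notin> E"
    have "Fq q \<gamma> t z (\<psi> z) \<ge> Fm - \<epsilon>" using eps[OF z(2)] m[OF z(1)] z(1) unfolding c_def by auto
    then have "Fq q \<gamma> t z (\<psi> z) / A \<ge> (Fm - \<epsilon>) / A" using A by (simp add: divide_right_mono)
    then show "\<exists>D. (deriv \<psi> has_real_derivative D) (at z) \<and> (Fm - \<epsilon>) / A \<le> D" using der[OF z(2)] by blast
  qed simp
  have pp: "deriv \<psi> pi = deriv \<psi> (-pi)"
    using periodic_deriv[OF per dif] unfolding periodic_2pi_def by (metis add.commute diff_add_cancel mult_2 uminus_add_conv_diff)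
  have "0 \<le> (Fp + \<epsilon>) / A * (pi - 0) + (Fm + \<epsilon>) / A * (0 - (-pi))" using u1 u2 pp by linarith
  also have "\<dots> = (Fp + Fm + 2 * \<epsilon>) * (pi / A)" using A by (simp add: field_simps)
  finally have "0 \<le> (Fp + Fm + 2 * \<epsilon>) * (pi / A)" .
  moreover have pA: "pi / A > 0" using A by simp
  ultimately have s1: "0 \<le> Fp + Fm + 2 * \<epsilon>" by (meson mult_neg_pos not_le)
  have "(Fp + Fm - 2 * \<epsilon>) * (pi / A) = (Fp - \<epsilon>) / A * (pi - 0) + (Fm - \<epsilon>) / A * (0 - (-pi))" using A by (simp add: field_simps)
  also have "\<dots> \<le> 0" using l1 l2 pp by linarith
  finally have "(Fp + Fm - 2 * \<epsilon>) * (pi / A) \<le> 0" .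
  then have s2: "Fp + Fm - 2 * \<epsilon> \<le> 0" using pA by (meson mult_pos_pos not_le)
  have "Fp + Fm = 2 * ((1 + t^2) * c powr (q - 1) - (1 + \<gamma>^2) * c powr (- q - 1))"
    unfolding Fp_def Fm_def by (simp add: power2_eq_square algebra_simps)
  then show ?thesis using s1 s2 unfolding c_def by (simp add: abs_le_iff)
qed

end



definition "Mc q t \<gamma> = (mx2 \<gamma> / mn2 t) powr (1 / (2 * q))"
definition "mc q t \<gamma> = (mn2 \<gamma> / mx2 t) powr (1 / (2 * q))"
definition "Kc q t \<gamma> = mx2 t * Mc q t \<gamma> powr (q - 1) + mx2 \<gamma> * mc q t \<gamma> powr (- q - 1)"

lemma per_d:
  assumes S: "sol \<psi> q A t \<gamma> L E"
  shows "\<And>x. mc q t \<gamma> \<le> \<psi> x" "\<And>x. \<psi> x \<le> Mc q t \<gamma>" "mc q t \<gamma> > 0" "Kc q t \<gamma> \<ge> 0"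
    "\<And>y. \<bar>\<psi> y - \<psi> 0\<bar> \<le> 2 * pi^2 * Kc q t \<gamma> / A"
    "\<And>y. \<bar>deriv \<psi> y\<bar> \<le> 2 * pi * Kc q t \<gamma> / A"
    "AE x in lebesgue. \<bar>deriv (deriv \<psi>) x\<bar> \<le> Kc q t \<gamma> / A"
    "\<And>\<epsilon> \<eta>. (\<forall>x s u. sin x \<noteq> 0 \<longrightarrow> mc q t \<gamma> \<le> s \<longrightarrow> s \<le> Mc q t \<gamma> \<longrightarrow> mc q t \<gamma> \<le> u \<longrightarrow> u \<le> Mc q t \<gamma>
          \<longrightarrow> \<bar>s - u\<bar> \<le> \<eta> \<longrightarrow> \<bar>Fq q \<gamma> t x s - Fq q \<gamma> t x u\<bar> \<le> \<epsilon>) \<Longrightarrow>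
       2 * pi^2 * Kc q t \<gamma> / A \<le> \<eta> \<Longrightarrow>
       \<bar>(1 + t^2) * \<psi> 0 powr (q - 1) - (1 + \<gamma>^2) * \<psi> 0 powr (- q - 1)\<bar> \<le> \<epsilon>"
proof -
  interpret sol \<psi> q A t \<gamma> L E by (rule S)
  have M: "M0 = Mc q t \<gamma>" by (simp add: M0_def Mc_def)
  have m: "m0 = mc q t \<gamma>" by (simp add: m0_def mc_def)
  have K: "K = Kc q t \<gamma>" by (simp add: K_def Kc_def M m)
  show "\<And>x. mc q t \<gamma> \<le> \<psi> x" using lower m by simp
  show "\<And>x. \<psi> x \<le> Mc q t \<gamma>" using upper M by simp
  show "mc q t \<gamma> > 0" using m0pos m by simp
  show "Kc q t \<gamma> \<ge> 0" using K0 K by simp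
  show "\<And>y. \<bar>\<psi> y - \<psi> 0\<bar> \<le> 2 * pi^2 * Kc q t \<gamma> / A" using psi_osc K by simp
  show "\<And>y. \<bar>deriv \<psi> y\<bar> \<le> 2 * pi * Kc q t \<gamma> / A" using dpsi_bound K by simp
  have "AE x in lebesgue. x \<notin> E" using negE by (simp add: negligible_iff_null_sets AE_not_in)
  then show "AE x in lebesgue. \<bar>deriv (deriv \<psi>) x\<bar> \<le> Kc q t \<gamma> / A"
    by (rule AE_mp) (use ddpsi K in auto)
  fix \<epsilon> \<eta>
  assume h: "\<forall>x s u. sin x \<noteq> 0 \<longrightarrow> mc q t \<gamma> \<le> s \<longrightarrow> s \<le> Mc q t \<gamma> \<longrightarrow> mc q t \<gamma> \<le> u \<longrightarrow> u \<le> Mc q t \<gamma>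
          \<longrightarrow> \<bar>s - u\<bar> \<le> \<eta> \<longrightarrow> \<bar>Fq q \<gamma> t x s - Fq q \<gamma> t x u\<bar> \<le> \<epsilon>"
    and h2: "2 * pi^2 * Kc q t \<gamma> / A \<le> \<eta>"
  show "\<bar>(1 + t^2) * \<psi> 0 powr (q - 1) - (1 + \<gamma>^2) * \<psi> 0 powr (- q - 1)\<bar> \<le> \<epsilon>"
  proof (rule G_est)
    fix x assume x: "x \<notin> E" "x \<in> {-pi..pi}"
    have "\<bar>\<psi> x - \<psi> 0\<bar> \<le> \<eta>" using psi_osc[of x] h2 K by simp
    then show "\<bar>Fq q \<gamma> t x (\<psi> x) - Fq q \<gamma> t x (\<psi> 0)\<bar> \<le> \<epsilon>"
      using h[rule_format, of x "\<psi> x" "\<psi> 0"] sinE[OF x(1)] lower[of x] lower[of 0] upper[of x] upper[of 0] M m by simp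
  qed
qed

lemma mk_sol:
  assumes P: "is_pos_solution nr q \<kappa> \<gamma> t d \<psi>" and q: "q > 1" and k: "\<kappa> > 0" and d: "d > 0"
    and t: "\<bar>t\<bar> \<noteq> 1" and g: "\<bar>\<gamma>\<bar> < 1"
  shows "\<exists>L E. sol \<psi> q (2 * q * d powr (- 2 * q / nr)) t \<gamma> L E"
proof -
  from P have W: "W2inf_circle \<psi>" and pos: "\<And>x. \<psi> x > 0"
    and AE: "AE x in lebesgue. \<exists>D. (deriv \<psi> has_real_derivative D) (at x) \<and>
        - 2 * \<kappa> * q * d powr (- 2 * q / nr) * D
        - \<kappa> * (\<gamma> + lam x)^2 * \<psi> x powr (- q - 1)
        + \<kappa> * (t + lam x)^2 * \<psi> x powr (q - 1) = 0"
    unfolding is_pos_solution_def by auto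
  from W obtain L where per: "periodic_2pi \<psi>" and dif: "\<And>x. \<psi> differentiable (at x)"
    and lip: "\<And>x y. \<bar>deriv \<psi> x - deriv \<psi> y\<bar> \<le> L * \<bar>x - y\<bar>"
    unfolding W2inf_circle_def by blast
  from AE obtain N where N: "{x \<in> space lebesgue. \<not> (\<exists>D. (deriv \<psi> has_real_derivative D) (at x) \<and>
        - 2 * \<kappa> * q * d powr (- 2 * q / nr) * D
        - \<kappa> * (\<gamma> + lam x)^2 * \<psi> x powr (- q - 1)
        + \<kappa> * (t + lam x)^2 * \<psi> x powr (q - 1) = 0)} \<subseteq> N" "emeasure lebesgue N = 0" "N \<in> sets lebesgue"
    by (rule AE_E)
  define E where "E = N \<union> {x::real. sin x = 0}"
  have "N \<in> null_sets lebesgue" using N(2,3) by (intro null_setsI)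
  then have "negligible N" by (simp only: negligible_iff_null_sets)
  then have negE: "negligible E" unfolding E_def using negligible_sin_zero by simp
  define A where "A = 2 * q * d powr (- 2 * q / nr)"
  have A: "A > 0" using q d by (simp add: A_def)
  have der: "(deriv \<psi> has_real_derivative Fq q \<gamma> t x (\<psi> x) / A) (at x)" if x: "x \<notin> E" for x
  proof -
    from x N(1) obtain D where D: "(deriv \<psi> has_real_derivative D) (at x)"
      "- 2 * \<kappa> * q * d powr (- 2 * q / nr) * D
        - \<kappa> * (\<gamma> + lam x)^2 * \<psi> x powr (- q - 1)
        + \<kappa> * (t + lam x)^2 * \<psi> x powr (q - 1) = 0" unfolding E_def by auto
    have "\<kappa> * (A * D) = \<kappa> * Fq q \<gamma> t x (\<psi> x)" using D(2) unfolding A_def Fq_def by (simp add: algebra_simps)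
    then have "A * D = Fq q \<gamma> t x (\<psi> x)" using k by simp
    then have "D = Fq q \<gamma> t x (\<psi> x) / A" using A by (simp add: field_simps)
    then show ?thesis using D(1) by simp
  qed
  have "sol \<psi> q A t \<gamma> L E"
    by unfold_locales (use q A t g per dif lip pos negE der in \<open>auto simp: E_def\<close>)
  then show ?thesis unfolding A_def by blast
qed




lemma leb_Icc: "a \<le> b \<Longrightarrow> emeasure lebesgue {a..b::real} = ennreal (b - a)"
  by simp

lemma ucont_powr:
  fixes m M r e :: real
  assumes "m > 0" "e > 0"
  shows "\<exists>\<delta>>0. \<forall>s\<in>{m..M}. \<forall>u\<in>{m..M}. \<bar>s - u\<bar> < \<delta> \<longrightarrow> \<bar>s powr r - u powr r\<bar> < e"
proof -
  have "continuous_on {m..M} (\<lambda>s. s powr r)"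
    by (intro continuous_intros) (use assms in auto)
  then have "uniformly_continuous_on {m..M} (\<lambda>s. s powr r)"
    by (intro compact_uniformly_continuous) auto
  then obtain \<delta> where "\<delta> > 0" "\<forall>x\<in>{m..M}. \<forall>x'\<in>{m..M}. dist x' x < \<delta> \<longrightarrow> dist (x' powr r) (x powr r) < e"
    unfolding uniformly_continuous_on_def using assms by metis
  then show ?thesis by (auto simp: dist_real_def)
qed

lemma Fq_diff:
  assumes "sin x \<noteq> 0" "\<bar>s powr (q - 1) - u powr (q - 1)\<bar> \<le> e" "\<bar>s powr (- q - 1) - u powr (- q - 1)\<bar> \<le> e"
  shows "\<bar>Fq q \<gamma> t x s - Fq q \<gamma> t x u\<bar> \<le> (mx2 t + mx2 \<gamma>) * e"
proof -
  have a: "(t + lam x)^2 \<le> mx2 t" "(\<gamma> + lam x)^2 \<le> mx2 \<gamma>" using sq_bounds[OF assms(1)] by auto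
  have "Fq q \<gamma> t x s - Fq q \<gamma> t x u = (t + lam x)^2 * (s powr (q - 1) - u powr (q - 1)) - (\<gamma> + lam x)^2 * (s powr (- q - 1) - u powr (- q - 1))"
    unfolding Fq_def by (simp add: algebra_simps)
  also have "\<bar>\<dots>\<bar> \<le> (t + lam x)^2 * \<bar>s powr (q - 1) - u powr (q - 1)\<bar> + (\<gamma> + lam x)^2 * \<bar>s powr (- q - 1) - u powr (- q - 1)\<bar>"
    using abs_triangle_ineq4[of "(t + lam x)^2 * (s powr (q - 1) - u powr (q - 1))" "(\<gamma> + lam x)^2 * (s powr (- q - 1) - u powr (- q - 1))"]
    by (simp add: abs_mult)
  also have "\<dots> \<le> mx2 t * e + mx2 \<gamma> * e"
    using a assms(2,3) mx2_nn[of t] mx2_nn[of \<gamma>] by (intro add_mono mult_mono) auto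
  finally show ?thesis by (simp add: algebra_simps)
qed

lemma alg_G:
  fixes c q t \<gamma> :: real
  assumes "c > 0"
  shows "c powr (q + 1) * ((1 + t^2) * c powr (q - 1) - (1 + \<gamma>^2) * c powr (- q - 1)) = (1 + t^2) * c powr (2 * q) - (1 + \<gamma>^2)"
proof -
  have "c powr (q + 1) * c powr (q - 1) = c powr (2 * q)" by (simp add: powr_add[symmetric])
  moreover have "c powr (q + 1) * c powr (- q - 1) = 1" using assms by (simp add: powr_add[symmetric])
  ultimately show ?thesis by (simp add: algebra_simps)
qed

lemma powr_to0:
  fixes f :: "real \<Rightarrow> real"
  assumes "(f \<longlongrightarrow> 0) F" "\<forall>\<^sub>F x in F. 0 \<le> f x" "p > 0"
  shows "((\<lambda>x. f x powr p) \<longlongrightarrow> 0) F"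
  using tendsto_zero_powrI[OF assms(1) tendsto_const assms(2,3)] .

theorem lemma3p22:
  fixes n :: nat and p t :: real and N :: "real \<Rightarrow> real"
    and \<psi> :: "real \<Rightarrow> real \<Rightarrow> real"
  assumes "n \<ge> 3" and "p > 1"
    and "smooth_on_circle N" and "\<forall>x. N x > 0"
    and "\<forall>d>0. is_pos_solution (real n) (2 * real n / (real n - 2)) ((real n - 1) / real n)
                   (gammaN N) t d (\<psi> d)"
    and "\<bar>t\<bar> \<noteq> 1"
  shows "((\<lambda>d. W2p_dist_pow p (\<psi> d)
             (((1 + (gammaN N)^2) / (1 + t^2)) powr (1 / (2 * (2 * real n / (real n - 2))))))
           \<longlongrightarrow> 0) (at_right 0) \<and>
         uniform_limit UNIV \<psi>
           (\<lambda>x. ((1 + (gammaN N)^2) / (1 + t^2)) powr (1 / (2 * (2 * real n / (real n - 2)))))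
           (at_right 0) \<and>
         ((\<lambda>d. \<psi> d 0) \<longlongrightarrow>
           ((1 + (gammaN N)^2) / (1 + t^2)) powr (1 / (2 * (2 * real n / (real n - 2)))))
           (at_right 0)"
proof -
  define q where "q = 2 * real n / (real n - 2)"
  define \<gamma> where "\<gamma> = gammaN N"
  define R where "R = (1 + \<gamma>^2) / (1 + t^2)"
  define \<Psi> where "\<Psi> = R powr (1 / (2 * q))"
  define A where "A d = 2 * q * d powr (- 2 * q / real n)" for d
  define K where "K = Kc q t \<gamma>"
  define Mm where "Mm = Mc q t \<gamma>"
  define mm where "mm = mc q t \<gamma>"
  have n2: "real n - 2 \<ge> 1" using assms(1) by simp
  have q: "q > 1" unfolding q_def using n2 by (simp add: field_simps)
  have kap: "(real n - 1) / real n > 0" using assms(1) by simp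
  have g: "\<bar>\<gamma>\<bar> < 1" unfolding \<gamma>_def using gamma_bound assms(3,4) by blast
  have R0: "R > 0" unfolding R_def by (simp add: add_pos_nonneg)
  have A0: "A d > 0" if "d > 0" for d using q that by (simp add: A_def)
  have S: "\<exists>L E. sol (\<psi> d) q (A d) t \<gamma> L E" if d: "d > 0" for d
    unfolding A_def
    by (rule mk_sol[OF _ q kap d assms(6) g]) (use assms(5) d in \<open>simp add: q_def \<gamma>_def\<close>)
  have Pb: "mm \<le> \<psi> d x \<and> \<psi> d x \<le> Mm" if "d > 0" for d x
    using S[OF that] per_d(1,2) unfolding mm_def Mm_def by blast
  have mm0: "mm > 0" and K0: "K \<ge> 0" using S[of 1] per_d(3,4) unfolding mm_def K_def by auto
  have Po: "\<bar>\<psi> d y - \<psi> d 0\<bar> \<le> 2 * pi^2 * K / A d" if "d > 0" for d y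
    using S[OF that] per_d(5) unfolding K_def by blast
  have Pd: "\<bar>deriv (\<psi> d) y\<bar> \<le> 2 * pi * K / A d" if "d > 0" for d y
    using S[OF that] per_d(6) unfolding K_def by blast
  have Pdd: "AE x in lebesgue. \<bar>deriv (deriv (\<psi> d)) x\<bar> \<le> K / A d" if "d > 0" for d
    using S[OF that] per_d(7) unfolding K_def by blast
  have PG: "\<bar>(1 + t^2) * \<psi> d 0 powr (q - 1) - (1 + \<gamma>^2) * \<psi> d 0 powr (- q - 1)\<bar> \<le> \<epsilon>"
    if d0: "d > 0" and hh: "\<forall>x s u. sin x \<noteq> 0 \<longrightarrow> mm \<le> s \<longrightarrow> s \<le> Mm \<longrightarrow> mm \<le> u \<longrightarrow> u \<le> Mm
          \<longrightarrow> \<bar>s - u\<bar> \<le> \<eta> \<longrightarrow> \<bar>Fq q \<gamma> t x s - Fq q \<gamma> t x u\<bar> \<le> \<epsilon>"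
       and hh2: "2 * pi^2 * K / A d \<le> \<eta>" for d \<epsilon> \<eta>
  proof -
    obtain L E where "sol (\<psi> d) q (A d) t \<gamma> L E" using S[OF d0] by blast
    from per_d(8)[OF this, of \<eta> \<epsilon>] hh hh2 show ?thesis unfolding mm_def Mm_def K_def by blast
  qed
  have evpos: "\<forall>\<^sub>F d in at_right 0. d > (0::real)" by (rule eventually_at_right_less)
  have invA: "((\<lambda>d. C / A d) \<longlongrightarrow> 0) (at_right 0)" for C
  proof -
    have e: "2 * q / real n > 0" using q assms(1) by simp
    have "((\<lambda>d::real. d powr (2 * q / real n)) \<longlongrightarrow> 0) (at_right 0)"
      by (rule powr_to0[OF _ _ e]) (auto intro: tendsto_ident_at eventually_mono[OF evpos])
    then have lim: "((\<lambda>d::real. C / (2 * q) * d powr (2 * q / real n)) \<longlongrightarrow> 0) (at_right 0)"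
      using tendsto_mult_right_zero by blast
    have eq: "\<forall>\<^sub>F d in at_right 0. C / (2 * q) * d powr (2 * q / real n) = C / A d"
      using evpos
    proof eventually_elim
      case (elim d)
      have 1: "- 2 * q / real n = - (2 * q / real n)" by simp
      have "A d = 2 * q / d powr (2 * q / real n)" unfolding A_def 1 powr_minus by (simp add: divide_inverse)
      then show ?case using q elim by simp
    qed
    show ?thesis using lim tendsto_cong[OF eq] by blast
  qed
  have claim1: "\<forall>\<^sub>F d in at_right 0. \<bar>(1 + t^2) * \<psi> d 0 powr (q - 1) - (1 + \<gamma>^2) * \<psi> d 0 powr (- q - 1)\<bar> \<le> \<epsilon>"
    if e: "\<epsilon> > 0" for \<epsilon>
  proof -
    define e' where "e' = \<epsilon> / (mx2 t + mx2 \<gamma> + 1)"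
    have e': "e' > 0" unfolding e'_def using e mx2_nn[of t] mx2_nn[of \<gamma>] by simp
    obtain \<delta>1 where \<delta>1: "\<delta>1 > 0" "\<forall>s\<in>{mm..Mm}. \<forall>u\<in>{mm..Mm}. \<bar>s - u\<bar> < \<delta>1 \<longrightarrow> \<bar>s powr (q - 1) - u powr (q - 1)\<bar> < e'"
      using ucont_powr[OF mm0 e'] by blast
    obtain \<delta>2 where \<delta>2: "\<delta>2 > 0" "\<forall>s\<in>{mm..Mm}. \<forall>u\<in>{mm..Mm}. \<bar>s - u\<bar> < \<delta>2 \<longrightarrow> \<bar>s powr (- q - 1) - u powr (- q - 1)\<bar> < e'"
      using ucont_powr[OF mm0 e'] by blast
    define \<eta> where "\<eta> = min \<delta>1 \<delta>2 / 2"
    have \<eta>: "\<eta> > 0" using \<delta>1 \<delta>2 by (simp add: \<eta>_def)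
    have H: "\<forall>x s u. sin x \<noteq> 0 \<longrightarrow> mm \<le> s \<longrightarrow> s \<le> Mm \<longrightarrow> mm \<le> u \<longrightarrow> u \<le> Mm
          \<longrightarrow> \<bar>s - u\<bar> \<le> \<eta> \<longrightarrow> \<bar>Fq q \<gamma> t x s - Fq q \<gamma> t x u\<bar> \<le> \<epsilon>"
    proof (intro allI impI)
      fix x s u :: real assume h: "sin x \<noteq> 0" "mm \<le> s" "s \<le> Mm" "mm \<le> u" "u \<le> Mm" "\<bar>s - u\<bar> \<le> \<eta>"
      have "\<bar>s - u\<bar> < \<delta>1" "\<bar>s - u\<bar> < \<delta>2" using h(6) \<delta>1 \<delta>2 unfolding \<eta>_def by auto
      then have "\<bar>s powr (q - 1) - u powr (q - 1)\<bar> \<le> e'" "\<bar>s powr (- q - 1) - u powr (- q - 1)\<bar> \<le> e'"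
        using \<delta>1(2) \<delta>2(2) h by fastforce+
      then have "\<bar>Fq q \<gamma> t x s - Fq q \<gamma> t x u\<bar> \<le> (mx2 t + mx2 \<gamma>) * e'" using Fq_diff h(1) by blast
      also have "\<dots> \<le> \<epsilon>" unfolding e'_def using e mx2_nn[of t] mx2_nn[of \<gamma>] by (simp add: field_simps)
      finally show "\<bar>Fq q \<gamma> t x s - Fq q \<gamma> t x u\<bar> \<le> \<epsilon>" .
    qed
    have "\<forall>\<^sub>F d in at_right 0. 2 * pi^2 * K / A d < \<eta>"
      using order_tendstoD(2)[OF invA[of "2 * pi^2 * K"] \<eta>] .
    then show ?thesis using evpos
      by eventually_elim (use PG H in \<open>auto intro: less_imp_le\<close>)
  qed
  have claim2: "((\<lambda>d. \<psi> d 0 powr (2 * q)) \<longlongrightarrow> R) (at_right 0)"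
  proof (rule tendstoI)
    fix \<epsilon> :: real assume e: "\<epsilon> > 0"
    define e1 where "e1 = \<epsilon> * (1 + t^2) / (Mm powr (q + 1) + 1) / 2"
    have Mp: "Mm powr (q + 1) \<ge> 0" by simp
    have tt: "1 + t^2 > 0" by (simp add: add_pos_nonneg)
    have tt': "t^2 + 1 > 0" using tt by linarith
    have Mp1: "Mm powr (q + 1) + 1 > 0" using Mp by linarith
    have e1: "e1 > 0" unfolding e1_def using e Mp1 tt by (intro divide_pos_pos mult_pos_pos) auto
    show "\<forall>\<^sub>F d in at_right 0. dist (\<psi> d 0 powr (2 * q)) R < \<epsilon>"
      using claim1[OF e1] evpos
    proof eventually_elim
      case (elim d)
      define c where "c = \<psi> d 0"
      have c: "mm \<le> c" "c \<le> Mm" using Pb[OF elim(2)] unfolding c_def by auto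
      have c0: "c > 0" using c mm0 by simp
      have "\<bar>(1 + t^2) * c powr (2 * q) - (1 + \<gamma>^2)\<bar>
           = c powr (q + 1) * \<bar>(1 + t^2) * c powr (q - 1) - (1 + \<gamma>^2) * c powr (- q - 1)\<bar>"
      proof -
        have "(1 + t^2) * c powr (2 * q) - (1 + \<gamma>^2) = c powr (q + 1) * ((1 + t^2) * c powr (q - 1) - (1 + \<gamma>^2) * c powr (- q - 1))"
          using alg_G[OF c0, of q t \<gamma>] by simp
        then show ?thesis by (simp add: abs_mult)
      qed
      also have "\<dots> \<le> Mm powr (q + 1) * e1"
        using elim(1) c q c0 unfolding c_def by (intro mult_mono powr_mono2) auto
      also have "\<dots> < \<epsilon> * (1 + t^2)"
      proof -
        have "Mm powr (q + 1) * e1 \<le> (Mm powr (q + 1) + 1) * e1" using e1 by simp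
        also have "\<dots> = \<epsilon> * (1 + t^2) / 2" unfolding e1_def using Mp1 by (simp add: field_simps)
        also have "\<dots> < \<epsilon> * (1 + t^2)" using e by (simp add: add_pos_nonneg tt tt')
        finally show ?thesis .
      qed
      finally have "\<bar>(1 + t^2) * c powr (2 * q) - (1 + \<gamma>^2)\<bar> < \<epsilon> * (1 + t^2)" .
      moreover have "\<bar>(1 + t^2) * c powr (2 * q) - (1 + \<gamma>^2)\<bar> = (1 + t^2) * \<bar>c powr (2 * q) - R\<bar>"
      proof -
        have "(1 + t^2) * c powr (2 * q) - (1 + \<gamma>^2) = (1 + t^2) * (c powr (2 * q) - R)"
        proof -
          have "(1 + t^2) * R = 1 + \<gamma>^2" unfolding R_def using tt by simp
          then show ?thesis by (simp add: right_diff_distrib)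
        qed
        then show ?thesis by (simp add: abs_mult add_pos_nonneg tt tt')
      qed
      ultimately have "(1 + t^2) * \<bar>c powr (2 * q) - R\<bar> < (1 + t^2) * \<epsilon>" by (metis mult.commute)
      then have "\<bar>c powr (2 * q) - R\<bar> < \<epsilon>" using mult_less_cancel_left_pos[OF tt] by blast
      then show ?case unfolding c_def by (simp add: dist_real_def)
    qed
  qed
  have claim3: "((\<lambda>d. \<psi> d 0) \<longlongrightarrow> \<Psi>) (at_right 0)"
  proof -
    have lim: "((\<lambda>d. (\<psi> d 0 powr (2 * q)) powr (1 / (2 * q))) \<longlongrightarrow> R powr (1 / (2 * q))) (at_right 0)"
      using tendsto_powr[OF claim2 tendsto_const] R0 by simp
    have eq: "\<forall>\<^sub>F d in at_right 0. (\<psi> d 0 powr (2 * q)) powr (1 / (2 * q)) = \<psi> d 0"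
      using evpos
    proof eventually_elim
      case (elim d)
      have "\<psi> d 0 > 0" using Pb[OF elim, of 0] mm0 by linarith
      then show ?case using q by (simp add: powr_powr)
    qed
    show ?thesis unfolding \<Psi>_def using lim tendsto_cong[OF eq] by blast
  qed
  have unif: "uniform_limit UNIV \<psi> (\<lambda>x. \<Psi>) (at_right 0)"
  proof (rule uniform_limitI)
    fix e :: real assume e: "e > 0"
    have "\<forall>\<^sub>F d in at_right 0. 2 * pi^2 * K / A d < e / 2" using order_tendstoD(2)[OF invA[of "2 * pi^2 * K"], of "e / 2"] e by simp
    moreover have "\<forall>\<^sub>F d in at_right 0. dist (\<psi> d 0) \<Psi> < e / 2" using tendstoD[OF claim3, of "e / 2"] e by simp
    ultimately show "\<forall>\<^sub>F d in at_right 0. \<forall>x\<in>UNIV. dist (\<psi> d x) \<Psi> < e"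
      using evpos
    proof eventually_elim
      case (elim d)
      show ?case
      proof
        fix x
        have "dist (\<psi> d x) \<Psi> \<le> \<bar>\<psi> d x - \<psi> d 0\<bar> + dist (\<psi> d 0) \<Psi>" by (simp add: dist_real_def)
        then show "dist (\<psi> d x) \<Psi> < e" using Po[OF elim(3), of x] elim by linarith
      qed
    qed
  qed
  define B where "B d = (2 * pi^2 * K / A d + \<bar>\<psi> d 0 - \<Psi>\<bar>) powr p + (2 * pi * K / A d) powr p + (K / A d) powr p" for d
  have p0: "p > 0" using assms(2) by simp
  have nnA: "\<forall>\<^sub>F d in at_right 0. 0 \<le> C * K / A d" if "C \<ge> 0" for C
    using evpos by eventually_elim (intro divide_nonneg_nonneg mult_nonneg_nonneg, use A0 K0 that in \<open>auto intro: less_imp_le\<close>)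
  have B0: "(B \<longlongrightarrow> 0) (at_right 0)"
  proof -
    have "((\<lambda>d. \<psi> d 0 - \<Psi>) \<longlongrightarrow> 0) (at_right 0)"
      using tendsto_diff[OF claim3 tendsto_const[of \<Psi>]] by simp
    then have t1: "((\<lambda>d. \<bar>\<psi> d 0 - \<Psi>\<bar>) \<longlongrightarrow> 0) (at_right 0)"
      by (rule tendsto_rabs_zero)
    have n1: "\<forall>\<^sub>F d in at_right 0. 0 \<le> 2 * pi^2 * K / A d" using nnA[of "2 * pi^2"] by simp
    have n2: "\<forall>\<^sub>F d in at_right 0. 0 \<le> 2 * pi * K / A d" using nnA[of "2 * pi"] by simp
    have n3: "\<forall>\<^sub>F d in at_right 0. 0 \<le> K / A d" using nnA[of 1] by simp
    have n1': "\<forall>\<^sub>F d in at_right 0. 0 \<le> 2 * pi^2 * K / A d + \<bar>\<psi> d 0 - \<Psi>\<bar>"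
      using n1 by (rule eventually_mono) simp
    have a: "((\<lambda>d. (2 * pi^2 * K / A d + \<bar>\<psi> d 0 - \<Psi>\<bar>) powr p) \<longlongrightarrow> 0) (at_right 0)"
      using powr_to0[OF tendsto_add_zero[OF invA[of "2 * pi^2 * K"] t1] n1' p0] .
    have b: "((\<lambda>d. (2 * pi * K / A d) powr p) \<longlongrightarrow> 0) (at_right 0)"
      using powr_to0[OF invA[of "2 * pi * K"] n2 p0] .
    have c: "((\<lambda>d. (K / A d) powr p) \<longlongrightarrow> 0) (at_right 0)"
      using powr_to0[OF invA[of K] n3 p0] .
    show ?thesis unfolding B_def using tendsto_add_zero[OF tendsto_add_zero[OF a b] c] by simp
  qed
  have Wbd: "W2p_dist_pow p (\<psi> d) \<Psi> \<le> ennreal (B d * (2 * pi))" if d: "d > 0" for d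
  proof -
    have "W2p_dist_pow p (\<psi> d) \<Psi> \<le> (\<integral>\<^sup>+ x. ennreal (B d) * indicator {-pi..pi} x \<partial>lebesgue)"
      unfolding W2p_dist_pow_def
    proof (rule nn_integral_mono_AE)
      show "AE x in lebesgue. ennreal (\<bar>\<psi> d x - \<Psi>\<bar> powr p + \<bar>deriv (\<psi> d) x\<bar> powr p
                + \<bar>deriv (deriv (\<psi> d)) x\<bar> powr p) * indicator {-pi..pi} x
             \<le> ennreal (B d) * indicator {-pi..pi} x"
        using Pdd[OF d]
      proof eventually_elim
        case (elim x)
        have i1: "\<bar>\<psi> d x - \<Psi>\<bar> \<le> 2 * pi^2 * K / A d + \<bar>\<psi> d 0 - \<Psi>\<bar>"
          using Po[OF d, of x] by linarith
        have "\<bar>\<psi> d x - \<Psi>\<bar> powr p + \<bar>deriv (\<psi> d) x\<bar> powr p + \<bar>deriv (deriv (\<psi> d)) x\<bar> powr p \<le> B d"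
          unfolding B_def using i1 Pd[OF d, of x] elim p0
          by (intro add_mono powr_mono2) auto
        then have "ennreal (\<bar>\<psi> d x - \<Psi>\<bar> powr p + \<bar>deriv (\<psi> d) x\<bar> powr p + \<bar>deriv (deriv (\<psi> d)) x\<bar> powr p) \<le> ennreal (B d)"
          by (rule ennreal_leI)
        then show ?case by (simp add: indicator_def del: ennreal_plus)
      qed
    qed
    also have "\<dots> = ennreal (B d) * emeasure lebesgue {-pi..pi}"
      by (rule nn_integral_cmult_indicator) simp
    also have "\<dots> = ennreal (B d * (2 * pi))"
    proof -
      have "emeasure lebesgue {-pi..pi} = ennreal (2 * pi)" using leb_Icc[of "-pi" pi] by simp
      then show ?thesis by (simp add: ennreal_mult'')
    qed
    finally show ?thesis .
  qed
  have W: "((\<lambda>d. W2p_dist_pow p (\<psi> d) \<Psi>) \<longlongrightarrow> 0) (at_right 0)"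
  proof (rule tendsto_sandwich[where f="\<lambda>_. 0" and h="\<lambda>d. ennreal (B d * (2 * pi))"])
    show "\<forall>\<^sub>F d in at_right 0. 0 \<le> W2p_dist_pow p (\<psi> d) \<Psi>" by simp
    show "\<forall>\<^sub>F d in at_right 0. W2p_dist_pow p (\<psi> d) \<Psi> \<le> ennreal (B d * (2 * pi))"
      using evpos by eventually_elim (rule Wbd)
    show "((\<lambda>_. 0::ennreal) \<longlongrightarrow> 0) (at_right 0)" by simp
    have "((\<lambda>d. B d * (2 * pi)) \<longlongrightarrow> 0) (at_right 0)" using tendsto_mult_left_zero[OF B0] by simp
    then show "((\<lambda>d. ennreal (B d * (2 * pi))) \<longlongrightarrow> 0) (at_right 0)"
      using tendsto_ennrealI[of "\<lambda>d. B d * (2 * pi)" 0] by simp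
  qed
  show ?thesis using W unif claim3 unfolding \<Psi>_def R_def \<gamma>_def q_def by blast
qed



end
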